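(* Let $S$ be a finite set, $\mathcal X=S^N$, $\mu$ uniform on $\mathcal X$, $P$ a Markov kernel on $\mathcal X$ reversible with respect to $\mu$ (of coordinate-replacement form), $\Omega\subseteq\mathcal X$ a $P$-invariant set with $\mu(\Omega)>0$, $\pi=\mu(\cdot\mid\Omega)$, and $G\subseteq\Omega$ with $\pi(G)>0$. Let $K_G(x,y)=P(x,y)$ for $x,y\in G$ (the kernel $P$ killed on exiting $G$) and $\pi_G=\pi(\cdot\mid G)$. Assume that every nonnegative $F:\mathcal X\to\mathbb R$ with $\operatorname{supp}(F)\subseteq G$ satisfies $\operatorname{Ent}_\mu(F^2)\le A\,\mathcal E_P^\mu(F,F)$. Then every nonnegative $f:G\to\mathbb R$ satisfies \[ \operatorname{Ent}_{\pi_G}(f^2)\le A\,\mathcal E^{\pi_G}_{K_G}(f,f). \]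
   Context: A coordinate-replacement kernel has the form $Pf(x)=\frac1N\sum_{i}\sum_{u\in S}K_i(x_{-i};x_i,u)f(x^{i,u})$ with each $K_i(x_{-i})$ a Markov kernel on $S$ reversible w.r.t. uniform measure ($x^{i,u}$: replace coordinate $i$ by $u$). $\operatorname{Ent}_\rho(f^2)=\rho(f^2\log f^2)-\rho(f^2)\log\rho(f^2)$. For a Markov kernel, $\mathcal E^\rho_K(f,f)=\frac12\sum_{x,y}\rho(x)K(x,y)(f(x)-f(y))^2$; for the substochastic kernel $K_G$ (nonnegative, row sums at most one), $\mathcal E^{\pi_G}_{K_G}(f,f)=\langle f,(I-K_G)f\rangle_{\pi_G}$. *)

theory Defs
  imports Complex_Main
begin

text \<open>Configurations: functions from a finite index type 'i (N = CARD('i) coordinates)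
  to a finite alphabet 'a (the set S). Measures are weight functions on the finite state space.\<close>

definition xlogx :: "real \<Rightarrow> real" where
  "xlogx t = (if t = 0 then 0 else t * ln t)"

definition Ent :: "('x::finite \<Rightarrow> real) \<Rightarrow> ('x \<Rightarrow> real) \<Rightarrow> real" where
  "Ent rho g = (\<Sum>x\<in>UNIV. rho x * xlogx (g x)) - xlogx (\<Sum>x\<in>UNIV. rho x * g x)"

definition dirichlet :: "('x::finite \<Rightarrow> real) \<Rightarrow> ('x \<Rightarrow> 'x \<Rightarrow> real) \<Rightarrow> ('x \<Rightarrow> real) \<Rightarrow> real" where
  "dirichlet rho K f = (1/2) * (\<Sum>x\<in>UNIV. \<Sum>y\<in>UNIV. rho x * K x y * (f x - f y)^2)"

definition dirichlet_sub :: "('x::finite \<Rightarrow> real) \<Rightarrow> ('x \<Rightarrow> 'x \<Rightarrow> real) \<Rightarrow> ('x \<Rightarrow> real) \<Rightarrow> real" where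
  "dirichlet_sub rho K f = (\<Sum>x\<in>UNIV. rho x * f x * (f x - (\<Sum>y\<in>UNIV. K x y * f y)))"

definition unif :: "'x::finite \<Rightarrow> real" where
  "unif (x::'x) = 1 / real (card (UNIV :: 'x set))"

definition cond :: "('x \<Rightarrow> real) \<Rightarrow> 'x set \<Rightarrow> 'x \<Rightarrow> real" where
  "cond rho A x = (if x \<in> A then rho x / sum rho A else 0)"

text \<open>Family of single-site kernels K i x: Markov kernel on S, reversible w.r.t. uniform
  measure (i.e. symmetric), depending on x only through x_{-i}.\<close>
definition coord_family :: "('i::finite \<Rightarrow> ('i \<Rightarrow> 'a::finite) \<Rightarrow> 'a \<Rightarrow> 'a \<Rightarrow> real) \<Rightarrow> bool" where
  "coord_family K \<longleftrightarrow>
     (\<forall>i x a b. K i x a b \<ge> 0) \<and>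
     (\<forall>i x a. (\<Sum>u\<in>UNIV. K i x a u) = 1) \<and>
     (\<forall>i x a b. K i x a b = K i x b a) \<and>
     (\<forall>i x c. K i (x(i := c)) = K i x)"

definition coord_P :: "('i::finite \<Rightarrow> ('i \<Rightarrow> 'a::finite) \<Rightarrow> 'a \<Rightarrow> 'a \<Rightarrow> real)
    \<Rightarrow> ('i \<Rightarrow> 'a) \<Rightarrow> ('i \<Rightarrow> 'a) \<Rightarrow> real" where
  "coord_P K (x::'i\<Rightarrow>'a) y = (1 / real (card (UNIV :: 'i set))) *
     (\<Sum>i\<in>UNIV. \<Sum>u\<in>UNIV. if x(i := u) = y then K i x (x i) u else 0)"

definition invariant_set :: "('x::finite \<Rightarrow> 'x \<Rightarrow> real) \<Rightarrow> 'x set \<Rightarrow> bool" where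
  "invariant_set P \<Omega> \<longleftrightarrow> (\<forall>x\<in>\<Omega>. (\<Sum>y\<in>\<Omega>. P x y) = 1)"

definition killed :: "('x \<Rightarrow> 'x \<Rightarrow> real) \<Rightarrow> 'x set \<Rightarrow> 'x \<Rightarrow> 'x \<Rightarrow> real" where
  "killed P G x y = (if x \<in> G \<and> y \<in> G then P x y else 0)"

end

theory Submission
  imports Defs
begin

lemma xlogx_ineq:
  fixes c M n :: real
  assumes "c > 0" "n > 0" "c * n \<le> 1" "M \<ge> 0"
  shows "xlogx (c * M) \<le> c * n * xlogx (M / n)"
proof (cases "M = 0")
  case True then show ?thesis by (simp add: xlogx_def)
next
  case False
  then have M: "M > 0" using assms by simp
  have "ln (c * M) \<le> ln (M / n)"
  proof -
    have "c * M \<le> M / n" using assms M by (simp add: field_simps)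
    then show ?thesis using assms M by simp
  qed
  then have "c * M * ln (c * M) \<le> c * M * ln (M / n)"
    using assms M by (simp add: mult_left_mono)
  moreover have "c * n * (M / n * ln (M / n)) = c * M * ln (M / n)" using assms by simp
  ultimately show ?thesis using assms M by (simp add: xlogx_def)
qed

lemma dir_identity:
  fixes P :: "'x::finite \<Rightarrow> 'x \<Rightarrow> real" and F :: "'x \<Rightarrow> real"
  assumes sym: "\<And>x y. P x y = P y x" and row: "\<And>x. (\<Sum>y\<in>UNIV. P x y) = 1"
  shows "(1/2) * (\<Sum>x\<in>UNIV. \<Sum>y\<in>UNIV. P x y * (F x - F y)^2)
       = (\<Sum>x\<in>UNIV. F x * (F x - (\<Sum>y\<in>UNIV. P x y * F y)))"
proof -
  have e: "\<And>x y. P x y * (F x - F y)^2 = P x y * (F x)^2 + P x y * (F y)^2 - 2 * (P x y * F x * F y)"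
    by (simp add: power2_eq_square algebra_simps)
  have a: "(\<Sum>x\<in>UNIV. \<Sum>y\<in>UNIV. P x y * (F x)^2) = (\<Sum>x\<in>UNIV. (F x)^2)"
    by (simp add: sum_distrib_right[symmetric] row)
  have b: "(\<Sum>x\<in>UNIV. \<Sum>y\<in>UNIV. P x y * (F y)^2) = (\<Sum>x\<in>UNIV. (F x)^2)"
    apply (subst sum.swap) using a sym by simp
  have "(\<Sum>x\<in>UNIV. \<Sum>y\<in>UNIV. P x y * (F x - F y)^2)
      = (\<Sum>x\<in>UNIV. \<Sum>y\<in>UNIV. P x y * (F x)^2) + (\<Sum>x\<in>UNIV. \<Sum>y\<in>UNIV. P x y * (F y)^2)
        - 2 * (\<Sum>x\<in>UNIV. \<Sum>y\<in>UNIV. P x y * F x * F y)"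
    by (simp add: e sum.distrib sum_subtractf sum_distrib_left)
  also have "\<dots> = 2 * (\<Sum>x\<in>UNIV. F x * (F x - (\<Sum>y\<in>UNIV. P x y * F y)))"
    unfolding a b by (simp add: right_diff_distrib sum_subtractf sum_distrib_left power2_eq_square
          mult.assoc mult.left_commute)
  finally show ?thesis by simp
qed

theorem proposition2p3:
  fixes K :: "'i::finite \<Rightarrow> ('i \<Rightarrow> 'a::finite) \<Rightarrow> 'a \<Rightarrow> 'a \<Rightarrow> real"
    and \<Omega> G :: "('i \<Rightarrow> 'a) set" and A :: real
  defines "P \<equiv> coord_P K"
      and "\<mu> \<equiv> (unif :: ('i \<Rightarrow> 'a) \<Rightarrow> real)"
  defines "\<pi> \<equiv> cond \<mu> \<Omega>"
  defines "\<pi>G \<equiv> cond \<pi> G"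
  assumes K: "coord_family K"
    and rev: "\<forall>x y. \<mu> x * P x y = \<mu> y * P y x"
    and inv: "invariant_set P \<Omega>"
    and Omega_pos: "sum \<mu> \<Omega> > 0"
    and G_sub: "G \<subseteq> \<Omega>"
    and G_pos: "sum \<pi> G > 0"
    and LS: "\<forall>F :: ('i \<Rightarrow> 'a) \<Rightarrow> real. (\<forall>x. F x \<ge> 0) \<longrightarrow> {x. F x \<noteq> 0} \<subseteq> G \<longrightarrow>
              Ent \<mu> (\<lambda>x. (F x)^2) \<le> A * dirichlet \<mu> P F"
  shows "\<forall>f :: ('i \<Rightarrow> 'a) \<Rightarrow> real. (\<forall>x\<in>G. f x \<ge> 0) \<longrightarrow>
           Ent \<pi>G (\<lambda>x. (f x)^2) \<le> A * dirichlet_sub \<pi>G (killed P G) f"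
proof (intro allI impI)
  fix f :: "('i \<Rightarrow> 'a) \<Rightarrow> real"
  assume fpos: "\<forall>x\<in>G. f x \<ge> 0"
  define c :: real where "c = 1 / real (card (UNIV :: ('i \<Rightarrow> 'a) set))"
  define n :: real where "n = real (card G)"
  have cardU: "card (UNIV :: ('i \<Rightarrow> 'a) set) > 0" by (simp add: card_gt_0_iff)
  have c_pos: "c > 0" using cardU by (simp add: c_def)
  have mu: "\<And>x. \<mu> x = c" by (simp add: \<mu>_def unif_def c_def)
  have Gne: "G \<noteq> {}" using G_pos by auto
  have n_pos: "n > 0" using Gne by (simp add: n_def card_gt_0_iff)
  have cn: "c * n \<le> 1"
    using card_mono[of UNIV G] cardU by (simp add: c_def n_def field_simps)
  have sOm: "sum \<mu> \<Omega> = c * card \<Omega>" by (simp add: mu)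
  have cOm: "card \<Omega> > 0" using Omega_pos sOm c_pos
    by (metis mult_zero_right of_nat_0 less_irrefl neq0_conv)
  have pix: "\<And>x. \<pi> x = (if x \<in> \<Omega> then 1 / card \<Omega> else 0)"
    using c_pos by (simp add: \<pi>_def cond_def mu sOm)
  have sG: "sum \<pi> G = card G / card \<Omega>"
  proof -
    have "sum \<pi> G = sum (\<lambda>x. 1 / card \<Omega>) G"
      by (rule sum.cong) (use G_sub in \<open>auto simp: pix\<close>)
    then show ?thesis by simp
  qed
  have piG: "\<And>x. \<pi>G x = (if x \<in> G then 1 / n else 0)"
    using G_sub c_pos cOm unfolding \<pi>G_def cond_def sG by (auto simp: pix n_def)
  define F where "F x = (if x \<in> G then f x else 0)" for x
  have Fpos: "\<forall>x. F x \<ge> 0" using fpos by (simp add: F_def)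
  have Fsupp: "{x. F x \<noteq> 0} \<subseteq> G" by (auto simp: F_def split: if_splits)
  have LSF: "Ent \<mu> (\<lambda>x. (F x)^2) \<le> A * dirichlet \<mu> P F" using LS Fpos Fsupp by blast
  define S where "S = (\<Sum>x\<in>G. xlogx ((f x)^2))"
  define M where "M = (\<Sum>x\<in>G. (f x)^2)"
  have M_nn: "M \<ge> 0" by (simp add: M_def sum_nonneg)
  have sumG: "\<And>h. (\<Sum>x\<in>UNIV. (if x \<in> G then h x else 0)) = (\<Sum>x\<in>G. h x)"
    by (simp add: sum.If_cases)
  have E1: "Ent \<mu> (\<lambda>x. (F x)^2) = c * S - xlogx (c * M)"
  proof -
    have "(\<Sum>x\<in>UNIV. \<mu> x * xlogx ((F x)^2)) = (\<Sum>x\<in>UNIV. (if x \<in> G then c * xlogx ((f x)^2) else 0))"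
      by (rule sum.cong) (auto simp: mu F_def xlogx_def)
    moreover have "(\<Sum>x\<in>UNIV. \<mu> x * (F x)^2) = (\<Sum>x\<in>UNIV. (if x \<in> G then c * (f x)^2 else 0))"
      by (rule sum.cong) (auto simp: mu F_def)
    ultimately show ?thesis
      by (simp add: Ent_def sumG S_def M_def sum_distrib_left)
  qed
  have E2: "Ent \<pi>G (\<lambda>x. (f x)^2) = S / n - xlogx (M / n)"
  proof -
    have "(\<Sum>x\<in>UNIV. \<pi>G x * xlogx ((f x)^2)) = (\<Sum>x\<in>UNIV. (if x \<in> G then xlogx ((f x)^2) / n else 0))"
      by (rule sum.cong) (auto simp: piG)
    moreover have "(\<Sum>x\<in>UNIV. \<pi>G x * (f x)^2) = (\<Sum>x\<in>UNIV. (if x \<in> G then (f x)^2 / n else 0))"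
      by (rule sum.cong) (auto simp: piG)
    ultimately show ?thesis
      by (simp add: Ent_def sumG S_def M_def sum_divide_distrib)
  qed
  have Ent_ineq: "c * n * Ent \<pi>G (\<lambda>x. (f x)^2) \<le> Ent \<mu> (\<lambda>x. (F x)^2)"
  proof -
    have "c * n * (S / n - xlogx (M / n)) = c * S - c * n * xlogx (M / n)"
      using n_pos by (simp add: field_simps)
    then show ?thesis using E1 E2 xlogx_ineq[OF c_pos n_pos cn M_nn] by simp
  qed
  have Psym: "\<And>x y. P x y = P y x" using rev c_pos by (simp add: mu)
  have Prow: "\<And>x. (\<Sum>y\<in>UNIV. P x y) = 1"
  proof -
    fix x :: "'i \<Rightarrow> 'a"
    have "(\<Sum>y\<in>UNIV. \<Sum>i\<in>UNIV. \<Sum>u\<in>UNIV. if x(i := u) = y then K i x (x i) u else 0)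
        = (\<Sum>i\<in>UNIV. \<Sum>u\<in>UNIV. \<Sum>y\<in>UNIV. if x(i := u) = y then K i x (x i) u else 0)"
      apply (rule trans[OF sum.swap])
      apply (rule sum.cong[OF refl])
      apply (rule sum.swap)
      done
    also have "\<dots> = (\<Sum>i\<in>UNIV. \<Sum>u\<in>UNIV. K i x (x i) u)"
      by simp
    also have "\<dots> = (\<Sum>i\<in>(UNIV::'i set). 1)"
    proof -
      have "\<And>i. (\<Sum>u\<in>UNIV. K i x (x i) u) = 1" using K unfolding coord_family_def by blast
      then show ?thesis by simp
    qed
    finally show "(\<Sum>y\<in>UNIV. P x y) = 1"
      by (simp add: P_def coord_P_def sum_divide_distrib[symmetric] card_gt_0_iff)
  qed
  have D: "dirichlet \<mu> P F = c * n * dirichlet_sub \<pi>G (killed P G) f"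
  proof -
    have "dirichlet \<mu> P F = c * ((1/2) * (\<Sum>x\<in>UNIV. \<Sum>y\<in>UNIV. P x y * (F x - F y)^2))"
      by (simp add: dirichlet_def mu sum_distrib_left mult.assoc)
    also have "\<dots> = c * (\<Sum>x\<in>UNIV. F x * (F x - (\<Sum>y\<in>UNIV. P x y * F y)))"
      using dir_identity[OF Psym Prow] by simp
    also have "(\<Sum>x\<in>UNIV. F x * (F x - (\<Sum>y\<in>UNIV. P x y * F y)))
        = n * dirichlet_sub \<pi>G (killed P G) f"
    proof -
      have inner: "(\<Sum>y\<in>UNIV. P x y * (if y \<in> G then f y else 0)) = (\<Sum>y\<in>UNIV. killed P G x y * f y)" if "x \<in> G" for x
        by (rule sum.cong) (auto simp: F_def killed_def that)
      have "dirichlet_sub \<pi>G (killed P G) f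
          = (\<Sum>x\<in>UNIV. (if x \<in> G then (F x * (F x - (\<Sum>y\<in>UNIV. P x y * F y))) / n else 0))"
        unfolding dirichlet_sub_def
        by (rule sum.cong) (auto simp: piG inner F_def)
      also have "\<dots> = (\<Sum>x\<in>UNIV. F x * (F x - (\<Sum>y\<in>UNIV. P x y * F y))) / n"
        unfolding sum_divide_distrib by (rule sum.cong) (auto simp: F_def)
      finally show ?thesis using n_pos by simp
    qed
    finally show ?thesis by simp
  qed
  have "c * n * Ent \<pi>G (\<lambda>x. (f x)^2) \<le> c * n * (A * dirichlet_sub \<pi>G (killed P G) f)"
    using Ent_ineq LSF D by (simp add: algebra_simps)
  then show "Ent \<pi>G (\<lambda>x. (f x)^2) \<le> A * dirichlet_sub \<pi>G (killed P G) f"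
    using c_pos n_pos by simp
qed

end
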